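(* Let $h\ge 2$ and $k\ge 1$ be integers. Let $B'$ be a collection of $kh$ colored balls with exactly $h$ balls of color $i$ for each color $i\in[k]$. Let $C'\subseteq B'$ be obtained by keeping each ball independently with probability $\alpha\in[0,\frac{1}{2h}]$. Then the probability that all balls in $C'$ have distinct colors is at most $\exp(-kh(h-1)\alpha^2/4)$. *)

theory Defs
  imports "HOL-Probability.Probability"
begin

definition balls :: "nat \<Rightarrow> nat \<Rightarrow> (nat \<times> nat) set" where
  "balls k h = {0..<k} \<times> {0..<h}"

definition random_subcollection :: "'a set \<Rightarrow> real \<Rightarrow> 'a set pmf" where
  "random_subcollection B \<alpha> =
     map_pmf (\<lambda>f. {b \<in> B. f b}) (Pi_pmf B False (\<lambda>_. bernoulli_pmf \<alpha>))"

definition distinct_colours :: "(nat \<times> nat) set \<Rightarrow> bool" where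
  "distinct_colours C \<longleftrightarrow> inj_on fst C"

end

theory Submission
  imports Defs
begin

lemma ln_bound1:
  fixes x :: real assumes "0 \<le> x" "x < 1"
  shows "ln (1 - x) \<le> - x - x\<^sup>2 / 2"
proof -
  let ?g = "\<lambda>t::real. - t - t\<^sup>2 / 2 - ln (1 - t)"
  have "?g 0 \<le> ?g x"
  proof (rule DERIV_nonneg_imp_nondecreasing[OF assms(1)])
    fix t :: real assume t0: "0 \<le> t" and tx: "t \<le> x"
    hence t1: "t < 1" using assms by auto
    have "(?g has_real_derivative (- 1 - t + 1 / (1 - t))) (at t)"
      using t1 by (auto intro!: derivative_eq_intros simp: power2_eq_square field_simps)
    moreover have "- 1 - t + 1 / (1 - t) = t\<^sup>2 / (1 - t)"
      using t1 by (simp add: field_simps power2_eq_square)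
    moreover have "t\<^sup>2 / (1 - t) \<ge> 0" using t1 by simp
    ultimately show "\<exists>y. (?g has_real_derivative y) (at t) \<and> 0 \<le> y" by metis
  qed
  thus ?thesis by simp
qed

lemma ln_bound2:
  fixes y :: real assumes "0 \<le> y" "y \<le> 1/2"
  shows "ln (1 + y) \<le> y - y\<^sup>2 / 3"
proof -
  let ?g = "\<lambda>t::real. t - t\<^sup>2 / 3 - ln (1 + t)"
  have "?g 0 \<le> ?g y"
  proof (rule DERIV_nonneg_imp_nondecreasing[OF assms(1)])
    fix t :: real assume t0: "0 \<le> t" and ty: "t \<le> y"
    hence t: "0 \<le> t \<and> t \<le> y" by simp
    have "(?g has_real_derivative (1 - 2 * t / 3 - 1 / (1 + t))) (at t)"
      using t by (auto intro!: derivative_eq_intros simp: power2_eq_square field_simps)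
    moreover have "1 - 2 * t / 3 - 1 / (1 + t) = t * (1 - 2 * t) / (3 * (1 + t))"
      using t by (simp add: field_simps power2_eq_square)
    moreover have "t * (1 - 2 * t) / (3 * (1 + t)) \<ge> 0" using t assms by simp
    ultimately show "\<exists>z. (?g has_real_derivative z) (at t) \<and> 0 \<le> z" by metis
  qed
  thus ?thesis by simp
qed

lemma pbound:
  fixes m :: nat and a :: real
  assumes "m \<ge> 1" "0 \<le> a" "a \<le> 1 / (2 * (real m + 1))"
  shows "(1 - a) ^ m * (1 + real m * a) \<le> exp (- (real m + 1) * real m * a\<^sup>2 / 4)"
proof -
  have "1 / (2 * (real m + 1)) \<le> 1 / 2" by (simp add: field_simps)
  hence a1: "a < 1" using assms(3) by linarith
  have ma: "real m * a \<le> 1/2"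
  proof -
    have "real m * a \<le> (real m + 1) * a" using assms by (simp add: mult_right_mono)
    also have "\<dots> \<le> (real m + 1) * (1 / (2 * (real m + 1)))"
      using assms by (intro mult_left_mono) auto
    also have "\<dots> = 1/2" by simp
    finally show ?thesis .
  qed
  have "(1 - a) = exp (ln (1 - a))" using a1 by simp
  also have "\<dots> \<le> exp (- a - a\<^sup>2/2)" using ln_bound1[OF assms(2) a1] by simp
  finally have e1: "(1 - a) ^ m \<le> exp (- a - a\<^sup>2/2) ^ m"
    using a1 by (intro power_mono) auto
  have "1 + real m * a = exp (ln (1 + real m * a))" using assms by (simp add: add_pos_nonneg)
  also have "\<dots> \<le> exp (real m * a - (real m * a)\<^sup>2/3)"
    using ln_bound2[OF _ ma] assms by simp
  finally have e2: "1 + real m * a \<le> exp (real m * a - (real m * a)\<^sup>2/3)" .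
  have "(1 - a) ^ m * (1 + real m * a) \<le> exp (- a - a\<^sup>2/2) ^ m * exp (real m * a - (real m * a)\<^sup>2/3)"
    using e1 e2 a1 assms(2) by (intro mult_mono) auto
  also have "\<dots> = exp (real m * (- a - a\<^sup>2/2) + (real m * a - (real m * a)\<^sup>2/3))"
    by (simp add: exp_add exp_of_nat_mult)
  also have "\<dots> \<le> exp (- (real m + 1) * real m * a\<^sup>2 / 4)"
  proof -
    have "0 \<le> real m * a\<^sup>2" using assms by simp
    moreover have "0 \<le> (real m)\<^sup>2 * a\<^sup>2" by simp
    ultimately have "real m * (- a - a\<^sup>2/2) + (real m * a - (real m * a)\<^sup>2/3) \<le> - (real m + 1) * real m * a\<^sup>2 / 4"
      by (simp add: algebra_simps power2_eq_square power_mult_distrib)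
    thus ?thesis by simp
  qed
  finally show ?thesis .
qed
lemma prob_pair_Times:
  "measure_pmf.prob (pair_pmf M N) (A \<times> B) = measure_pmf.prob M A * measure_pmf.prob N B"
proof -
  have "measure_pmf.prob (pair_pmf M N) (A \<times> B) = measure_pmf.prob (pair_pmf M N) ((A \<times> B) \<inter> set_pmf (pair_pmf M N))"
    by (simp only: measure_Int_set_pmf)
  also have "(A \<times> B) \<inter> set_pmf (pair_pmf M N) = (A \<inter> set_pmf M) \<times> (B \<inter> set_pmf N)" by auto
  also have "measure_pmf.prob (pair_pmf M N) \<dots> = measure_pmf.prob M (A \<inter> set_pmf M) * measure_pmf.prob N (B \<inter> set_pmf N)"
    by (intro measure_pmf_prob_product) auto
  finally show ?thesis by (simp add: measure_Int_set_pmf)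
qed

definition Rb :: "nat \<Rightarrow> nat \<Rightarrow> (nat \<times> nat \<Rightarrow> bool) \<Rightarrow> bool" where
  "Rb h c g \<longleftrightarrow> (\<forall>i<h. \<forall>j<h. g (c,i) \<and> g (c,j) \<longrightarrow> i = j)"

definition Qb :: "nat \<Rightarrow> nat \<Rightarrow> (nat \<times> nat \<Rightarrow> bool) \<Rightarrow> bool" where
  "Qb h k f \<longleftrightarrow> (\<forall>c<k. Rb h c f)"

lemma block_prob:
  fixes \<alpha> :: real
  assumes "0 \<le> \<alpha>" "\<alpha> \<le> 1" "h \<ge> 1"
  shows "measure_pmf.prob (Pi_pmf ({c} \<times> {0..<h}) False (\<lambda>_. bernoulli_pmf \<alpha>)) {g. Rb h c g}
         = (1 - \<alpha>) ^ h + real h * \<alpha> * (1 - \<alpha>) ^ (h - 1)"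
proof -
  let ?A = "{c} \<times> {0..<h}"
  have cA: "card ?A = h" by (simp add: card_cartesian_product)
  have eq: "{g. Rb h c g} = (\<lambda>g. card {x\<in>?A. g x}) -` {0, 1}"
  proof -
    have "Rb h c g \<longleftrightarrow> card {x\<in>?A. g x} \<le> Suc 0" for g
    proof -
      have "card {x\<in>?A. g x} \<le> Suc 0 \<longleftrightarrow> (\<forall>a1\<in>{x\<in>?A. g x}. \<forall>a2\<in>{x\<in>?A. g x}. a1 = a2)"
        by (rule card_le_Suc0_iff_eq) simp
      also have "\<dots> \<longleftrightarrow> Rb h c g" unfolding Rb_def by fastforce
      finally show ?thesis by simp
    qed
    hence "Rb h c g \<longleftrightarrow> card {x\<in>?A. g x} \<in> {0, 1}" for g by (simp add: le_Suc_eq)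
    thus ?thesis by blast
  qed
  have "measure_pmf.prob (Pi_pmf ?A False (\<lambda>_. bernoulli_pmf \<alpha>)) {g. Rb h c g}
      = measure_pmf.prob (map_pmf (\<lambda>g. card {x\<in>?A. g x}) (Pi_pmf ?A False (\<lambda>_. bernoulli_pmf \<alpha>))) {0,1}"
    unfolding eq measure_map_pmf ..
  also have "map_pmf (\<lambda>g. card {x\<in>?A. g x}) (Pi_pmf ?A False (\<lambda>_. bernoulli_pmf \<alpha>)) = binomial_pmf h \<alpha>"
    using assms by (intro binomial_pmf_altdef'[symmetric]) (auto simp: cA)
  also have "measure_pmf.prob (binomial_pmf h \<alpha>) {0,1} = pmf (binomial_pmf h \<alpha>) 0 + pmf (binomial_pmf h \<alpha>) 1"
    by (subst measure_measure_pmf_finite) auto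
  also have "\<dots> = (1 - \<alpha>) ^ h + real h * \<alpha> * (1 - \<alpha>) ^ (h - 1)"
    using assms by simp
  finally show ?thesis .
qed

lemma main_prob:
  fixes \<alpha> :: real
  assumes "0 \<le> \<alpha>" "\<alpha> \<le> 1" "h \<ge> 1"
  shows "measure_pmf.prob (Pi_pmf (balls k h) False (\<lambda>_. bernoulli_pmf \<alpha>)) {f. Qb h k f}
         = ((1 - \<alpha>) ^ h + real h * \<alpha> * (1 - \<alpha>) ^ (h - 1)) ^ k"
proof (induction k)
  case 0
  show ?case by (simp add: Qb_def)
next
  case (Suc k)
  let ?p = "\<lambda>_::nat\<times>nat. bernoulli_pmf \<alpha>"
  have un: "balls (Suc k) h = balls k h \<union> {k} \<times> {0..<h}"
    by (auto simp: balls_def)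
  have "Pi_pmf (balls (Suc k) h) False ?p =
        map_pmf (\<lambda>(f,g) x. if x \<in> balls k h then f x else g x)
             (pair_pmf (Pi_pmf (balls k h) False ?p) (Pi_pmf ({k} \<times> {0..<h}) False ?p))"
    unfolding un by (intro Pi_pmf_union) (auto simp: balls_def)
  moreover have "(\<lambda>(f,g) x. if x \<in> balls k h then f x else g x) -` {f. Qb h (Suc k) f}
      = {f. Qb h k f} \<times> {g. Rb h k g}"
  proof (intro set_eqI)
    fix fg :: "(nat \<times> nat \<Rightarrow> bool) \<times> (nat \<times> nat \<Rightarrow> bool)"
    obtain f g where fg: "fg = (f, g)" by (cases fg)
    have A: "Rb h c (\<lambda>x. if x \<in> balls k h then f x else g x) = Rb h c f" if "c < k" for c
      using that unfolding Rb_def balls_def by auto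
    have B: "Rb h k (\<lambda>x. if x \<in> balls k h then f x else g x) = Rb h k g"
      unfolding Rb_def balls_def by auto
    have "Qb h (Suc k) (\<lambda>x. if x \<in> balls k h then f x else g x) \<longleftrightarrow> Qb h k f \<and> Rb h k g"
      unfolding Qb_def using A B by (auto simp: less_Suc_eq)
    thus "fg \<in> (\<lambda>(f,g) x. if x \<in> balls k h then f x else g x) -` {f. Qb h (Suc k) f} \<longleftrightarrow>
          fg \<in> {f. Qb h k f} \<times> {g. Rb h k g}" by (simp add: fg)
  qed
  ultimately have "measure_pmf.prob (Pi_pmf (balls (Suc k) h) False ?p) {f. Qb h (Suc k) f}
     = measure_pmf.prob (Pi_pmf (balls k h) False ?p) {f. Qb h k f} *
       measure_pmf.prob (Pi_pmf ({k} \<times> {0..<h}) False ?p) {g. Rb h k g}"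
    by (simp add: prob_pair_Times)
  also have "\<dots> = ((1 - \<alpha>) ^ h + real h * \<alpha> * (1 - \<alpha>) ^ (h - 1)) ^ Suc k"
    using Suc.IH block_prob[OF assms] by simp
  finally show ?case .
qed

lemma dc_iff:
  "distinct_colours {b \<in> balls k h. f b} \<longleftrightarrow> Qb h k f"
proof
  assume "distinct_colours {b \<in> balls k h. f b}"
  hence inj: "inj_on fst {b \<in> balls k h. f b}" by (simp add: distinct_colours_def)
  show "Qb h k f" unfolding Qb_def Rb_def
  proof (intro allI impI)
    fix c i j assume "c < k" "i < h" "j < h" "f (c, i) \<and> f (c, j)"
    hence "(c,i) \<in> {b \<in> balls k h. f b}" "(c,j) \<in> {b \<in> balls k h. f b}"
      by (auto simp: balls_def)
    from inj_onD[OF inj _ this] show "i = j" by simp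
  qed
next
  assume Q: "Qb h k f"
  show "distinct_colours {b \<in> balls k h. f b}"
    unfolding distinct_colours_def
  proof (rule inj_onI)
    fix x y assume x: "x \<in> {b \<in> balls k h. f b}" and y: "y \<in> {b \<in> balls k h. f b}" and e: "fst x = fst y"
    obtain c i where xi: "x = (c, i)" by (cases x)
    obtain j where yj: "y = (c, j)" using e xi by (cases y) auto
    have "c < k" "i < h" "j < h" "f (c,i)" "f (c,j)" using x y xi yj by (auto simp: balls_def)
    hence "i = j" using Q unfolding Qb_def Rb_def by blast
    thus "x = y" using xi yj by simp
  qed
qed

theorem lemma3p7:
  fixes h k :: nat and \<alpha> :: real
  assumes "h \<ge> 2" and "k \<ge> 1" and "0 \<le> \<alpha>" and "\<alpha> \<le> 1 / (2 * real h)"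
  shows "measure_pmf.prob (random_subcollection (balls k h) \<alpha>) {C. distinct_colours C}
           \<le> exp (- real k * real h * (real h - 1) * \<alpha>\<^sup>2 / 4)"
proof -
  obtain m where hm: "h = Suc m" and m1: "m \<ge> 1" using assms(1) by (cases h) auto
  have "1 / (2 * real h) \<le> 1" using assms(1) by (simp add: field_simps)
  hence a1: "\<alpha> \<le> 1" using assms(4) by linarith
  have h1: "h \<ge> 1" using assms(1) by simp
  define p where "p = (1 - \<alpha>) ^ h + real h * \<alpha> * (1 - \<alpha>) ^ (h - 1)"
  have "measure_pmf.prob (random_subcollection (balls k h) \<alpha>) {C. distinct_colours C}
      = measure_pmf.prob (Pi_pmf (balls k h) False (\<lambda>_. bernoulli_pmf \<alpha>)) {f. Qb h k f}"
    unfolding random_subcollection_def measure_map_pmf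
    by (rule arg_cong[where f = "measure_pmf.prob _"]) (auto simp: dc_iff)
  also have "\<dots> = p ^ k" unfolding p_def by (rule main_prob[OF assms(3) a1 h1])
  also have "\<dots> \<le> exp (- (real m + 1) * real m * \<alpha>\<^sup>2 / 4) ^ k"
  proof (rule power_mono)
    have "p = (1 - \<alpha>) ^ m * (1 + real m * \<alpha>)"
      unfolding p_def hm by (simp add: algebra_simps)
    also have "\<dots> \<le> exp (- (real m + 1) * real m * \<alpha>\<^sup>2 / 4)"
      using pbound[OF m1 assms(3)] assms(4) hm by (simp add: add.commute)
    finally show "p \<le> exp (- (real m + 1) * real m * \<alpha>\<^sup>2 / 4)" .
    show "0 \<le> p" unfolding p_def using assms(3) a1 by simp
  qed
  also have "\<dots> = exp (- real k * real h * (real h - 1) * \<alpha>\<^sup>2 / 4)"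
    by (simp add: exp_of_nat_mult[symmetric] hm algebra_simps)
  finally show ?thesis .
qed

end
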